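(* Let $T$ be an interface element and $\overline X\in l$ fixed. Define the piecewise $2\times4$ matrix function $V(X)=(X-\overline X)^T\otimes I_2$ for $X\in\overline T^+$ and $V(X)=\big((X-\overline X)^T\otimes I_2\big)\overline M^+$ for $X\in\overline T^-$. Then each column of $V$ is an IFE function on $T$ (with respect to any $F\in l$), i.e., it belongs to the local IFE space $\mathbf S_h(T)$.
   Context: Lamé parameters $\lambda^\pm,\mu^\pm>0$; stress $\sigma^s(\mathbf v)=\lambda^s(\nabla\cdot\mathbf v)I+2\mu^s\epsilon(\mathbf v)$. $T$ is a triangle with $\Pi_T=[\mathrm{span}\{1,x,y\}]^2$, or a square with $\Pi_T=[\mathrm{span}\{1,x,y,xy\}]^2$ or $[\mathrm{span}\{1,x,y,x^2-y^2\}]^2$. $\Gamma$ meets $\partial T$ at $D,E$; $l$ is the line through them with unit normal $\bar{\mathbf n}=(\bar n_1,\bar n_2)$, splitting $T$ into $\overline T^\pm$. An IFE function w.r.t. $F\in l$ is piecewise $\boldsymbol\phi^s\in\Pi_T$ on $\overline T^s$ with $\boldsymbol\phi^-=\boldsymbol\phi^+$ on $l$, (square cases) equal coefficient vectors of $xy$ (resp. $x^2-y^2$) in $\boldsymbol\phi^\pm$, and $\sigma^+(\boldsymbol\phi^+)(F)\bar{\mathbf n}=\sigma^-(\boldsymbol\phi^-)(F)\bar{\mathbf n}$; $\mathbf S_h(T)$ is the space of these functions (assumed unisolvent, i.e. spanned by the nodal IFE shape functions). $\overline N^s$ is the $4\times4$ matrix with rows $((\lambda^s+2\mu^s)\bar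 n_1,\mu^s\bar n_2,\mu^s\bar n_2,\lambda^s\bar n_1)$, $(\lambda^s\bar n_2,\mu^s\bar n_1,\mu^s\bar n_1,(\lambda^s+2\mu^s)\bar n_2)$, $(-\bar n_2,0,\bar n_1,0)$, $(0,-\bar n_2,0,\bar n_1)$; $\overline M^+=(\overline N^-)^{-1}\overline N^+$. $\otimes$ is the Kronecker product. *)

theory Defs
  imports "HOL-Analysis.Analysis"
begin

text \<open>Element types: triangle with P1, square with Q1 (span 1,x,y,xy),
  square with rotated Q1 (span 1,x,y,x^2-y^2).\<close>
datatype elem_kind = Tri | SqQ1 | SqRotQ1

definition qfun :: "elem_kind \<Rightarrow> real^2 \<Rightarrow> real" where
  "qfun k X = (case k of Tri \<Rightarrow> 0 | SqQ1 \<Rightarrow> X$1 * X$2 | SqRotQ1 \<Rightarrow> (X$1)^2 - (X$2)^2)"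

definition polyT :: "elem_kind \<Rightarrow> (nat \<Rightarrow> real^2) \<Rightarrow> real^2 \<Rightarrow> real^2" where
  "polyT k c X = c 0 + (X$1) *\<^sub>R c 1 + (X$2) *\<^sub>R c 2 + qfun k X *\<^sub>R c 3"

definition PiT :: "elem_kind \<Rightarrow> (real^2 \<Rightarrow> real^2) set" where
  "PiT k = range (polyT k)"

definition pd :: "(real^2 \<Rightarrow> real^2) \<Rightarrow> 2 \<Rightarrow> 2 \<Rightarrow> real^2 \<Rightarrow> real" where
  "pd v i j X = deriv (\<lambda>t. v (X + t *\<^sub>R axis j 1) $ i) 0"

definition stress :: "real \<Rightarrow> real \<Rightarrow> (real^2 \<Rightarrow> real^2) \<Rightarrow> real^2 \<Rightarrow> real^2^2" where
  "stress lam mu v X = (\<chi> i j. lam * (pd v 1 1 X + pd v 2 2 X) * (if i = j then 1 else 0)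
                              + mu * (pd v i j X + pd v j i X))"

definition is_IFE ::
  "elem_kind \<Rightarrow> real \<Rightarrow> real \<Rightarrow> real \<Rightarrow> real \<Rightarrow> real^2 \<Rightarrow> (real^2) set \<Rightarrow> (real^2) set
    \<Rightarrow> (real^2) set \<Rightarrow> real^2 \<Rightarrow> (real^2 \<Rightarrow> real^2) \<Rightarrow> bool" where
  "is_IFE k lamp mup lamm mum nbar Tp Tm l F v \<longleftrightarrow>
     (\<exists>cp cm. (\<forall>X\<in>Tp. v X = polyT k cp X) \<and> (\<forall>X\<in>Tm. v X = polyT k cm X)
        \<and> (\<forall>X\<in>l. polyT k cm X = polyT k cp X)
        \<and> (k \<noteq> Tri \<longrightarrow> cp 3 = cm 3)
        \<and> stress lamp mup (polyT k cp) F *v nbar = stress lamm mum (polyT k cm) F *v nbar)"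

definition Sh ::
  "elem_kind \<Rightarrow> real \<Rightarrow> real \<Rightarrow> real \<Rightarrow> real \<Rightarrow> real^2 \<Rightarrow> (real^2) set \<Rightarrow> (real^2) set
    \<Rightarrow> (real^2) set \<Rightarrow> real^2 \<Rightarrow> (real^2 \<Rightarrow> real^2) set" where
  "Sh k lamp mup lamm mum nbar Tp Tm l F = {v. is_IFE k lamp mup lamm mum nbar Tp Tm l F v}"

definition Nmat :: "real \<Rightarrow> real \<Rightarrow> real^2 \<Rightarrow> real^4^4" where
  "Nmat lam mu n = vector
     [ vector [(lam + 2*mu) * n$1, mu * n$2, mu * n$2, lam * n$1],
       vector [lam * n$2, mu * n$1, mu * n$1, (lam + 2*mu) * n$2],
       vector [- n$2, 0, n$1, 0],
       vector [0, - n$2, 0, n$1] ]"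

definition kron_I2 :: "real^2 \<Rightarrow> real^4^2" where
  "kron_I2 w = vector [ vector [w$1, 0, w$2, 0], vector [0, w$1, 0, w$2] ]"

definition admissible_elem :: "elem_kind \<Rightarrow> (real^2) set \<Rightarrow> bool" where
  "admissible_elem k T \<longleftrightarrow>
     (if k = Tri then (\<exists>A B C. \<not> collinear {A, B, C} \<and> T = convex hull {A, B, C})
      else (\<exists>a h. h > 0 \<and> T = cbox a (a + h *\<^sub>R vec 1)))"

end

theory Submission
  imports Defs
begin

lemma vector_4 [simp]:
 "(vector [x,y,z,w] ::('a::zero)^4)$1 = x"
 "(vector [x,y,z,w] ::('a::zero)^4)$2 = y"
 "(vector [x,y,z,w] ::('a::zero)^4)$3 = z"
 "(vector [x,y,z,w] ::('a::zero)^4)$4 = w"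
  unfolding vector_def by simp_all

lemma Nmat_mult:
  "(Nmat lam mu n *v c)$1 = (lam + 2*mu) * n$1 * c$1 + mu * n$2 * c$2 + mu * n$2 * c$3 + lam * n$1 * c$4"
  "(Nmat lam mu n *v c)$2 = lam * n$2 * c$1 + mu * n$1 * c$2 + mu * n$1 * c$3 + (lam + 2*mu) * n$2 * c$4"
  "(Nmat lam mu n *v c)$3 = - n$2 * c$1 + n$1 * c$3"
  "(Nmat lam mu n *v c)$4 = - n$2 * c$2 + n$1 * c$4"
  by (simp_all add: Nmat_def matrix_vector_mult_def sum_4 algebra_simps)

definition coef :: "real^2 \<Rightarrow> real^4 \<Rightarrow> nat \<Rightarrow> real^2" where
  "coef Xb c i = (if i = 0 then - (Xb$1 *\<^sub>R vector[c$1,c$2] + Xb$2 *\<^sub>R vector[c$3,c$4])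
     else if i = 1 then vector[c$1,c$2] else if i = 2 then vector[c$3,c$4] else 0)"

lemma kron_poly: "kron_I2 (X - Xb) *v c = polyT k (coef Xb c) X"
  by (simp add: vec_eq_iff forall_2 kron_I2_def matrix_vector_mult_def sum_4 polyT_def coef_def algebra_simps)

lemma column_mult: "column j (A ** B) = A *v column j B"
  by (simp add: column_def matrix_matrix_mult_def matrix_vector_mult_def vec_eq_iff)

lemma pd_poly:
  assumes "cc 3 = 0"
  shows "pd (polyT k cc) i j F = (if j = 1 then cc 1 $ i else cc 2 $ i)"
proof -
  define A where "A = (cc 0 + F$1 *\<^sub>R cc 1 + F$2 *\<^sub>R cc 2) $ i"
  define B where "B = (axis j 1 :: real^2)$1 * cc 1 $ i + (axis j 1 :: real^2)$2 * cc 2 $ i"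
  have e: "(\<lambda>t. polyT k cc (F + t *\<^sub>R axis j 1) $ i) = (\<lambda>t. A + t * B)"
    by (simp add: polyT_def fun_eq_iff algebra_simps assms A_def B_def)
  have "deriv (\<lambda>t. A + t * B) 0 = B"
    by (rule DERIV_imp_deriv) (auto intro!: derivative_eq_intros)
  then have "pd (polyT k cc) i j F = B" by (simp add: pd_def e)
  then show ?thesis
    using exhaust_2[of j] by (auto simp: B_def axis_def)
qed

lemma stress_poly:
  "(stress lam mu (polyT k (coef Xb c)) F *v n)$1 = (Nmat lam mu n *v c)$1"
  "(stress lam mu (polyT k (coef Xb c)) F *v n)$2 = (Nmat lam mu n *v c)$2"
  unfolding Nmat_mult by (simp_all add: stress_def matrix_vector_mult_def sum_2 pd_poly coef_def algebra_simps)

lemma Nmat_inv: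
  assumes "lam > 0" "mu > 0" "n$1 * n$1 + n$2 * n$2 = 1"
  shows "invertible (Nmat lam mu n)"
  unfolding invertible_left_inverse matrix_left_invertible_ker
proof (intro allI impI)
  fix x :: "real^4" assume h: "Nmat lam mu n *v x = 0"
  have r: "(Nmat lam mu n *v x)$i = 0" for i using h by simp
  note rr = r[of 1] r[of 2] r[of 3] r[of 4]
  have pos: "mu * (lam + 2*mu) \<noteq> 0" using assms by simp
  have "mu * (lam + 2*mu) * x$1 = 0" using rr assms(3) unfolding Nmat_mult by algebra
  moreover have "mu * (lam + 2*mu) * x$2 = 0" using rr assms(3) unfolding Nmat_mult by algebra
  moreover have "mu * (lam + 2*mu) * x$3 = 0" using rr assms(3) unfolding Nmat_mult by algebra
  moreover have "mu * (lam + 2*mu) * x$4 = 0" using rr assms(3) unfolding Nmat_mult by algebra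
  ultimately show "x = 0" using pos by (simp add: vec_eq_iff forall_4)
qed


lemma kron_cont:
  fixes w n :: "real^2" and c d :: "real^4"
  assumes "w$1 * n$1 + w$2 * n$2 = 0" "n$1 * n$1 + n$2 * n$2 = 1"
    "- n$2 * c$1 + n$1 * c$3 = - n$2 * d$1 + n$1 * d$3"
    "- n$2 * c$2 + n$1 * c$4 = - n$2 * d$2 + n$1 * d$4"
  shows "kron_I2 w *v c = kron_I2 w *v d"
proof -
  have "w$1 * c$1 + w$2 * c$3 = w$1 * d$1 + w$2 * d$3" using assms by algebra
  moreover have "w$1 * c$2 + w$2 * c$4 = w$1 * d$2 + w$2 * d$4" using assms by algebra
  ultimately show ?thesis
    by (simp add: vec_eq_iff forall_2 kron_I2_def matrix_vector_mult_def sum_4)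
qed

theorem mainTheorem14:
  fixes k :: elem_kind and T \<Gamma> :: "(real^2) set" and D E nbar Xbar :: "real^2"
    and lamp mup lamm mum :: real
  assumes "lamp > 0" "mup > 0" "lamm > 0" "mum > 0"
    and "admissible_elem k T"
    and "D \<noteq> E" "\<Gamma> \<inter> frontier T = {D, E}"
    and "open_segment D E \<subseteq> interior T"
    and "norm nbar = 1" "nbar \<bullet> (E - D) = 0"
    and "Xbar \<in> {X. \<exists>t::real. X = D + t *\<^sub>R (E - D)}"
  shows
    "let l = {X. \<exists>t::real. X = D + t *\<^sub>R (E - D)};
         Tp = {X \<in> T. (X - D) \<bullet> nbar \<ge> 0};
         Tm = {X \<in> T. (X - D) \<bullet> nbar \<le> 0};
         Mp = matrix_inv (Nmat lamm mum nbar) ** Nmat lamp mup nbar;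
         V = (\<lambda>X. if X \<in> Tp then kron_I2 (X - Xbar) else kron_I2 (X - Xbar) ** Mp)
     in \<forall>F\<in>l. \<forall>j::4. (\<lambda>X. column j (V X)) \<in> Sh k lamp mup lamm mum nbar Tp Tm l F"
proof -
  define l where "l = {X. \<exists>t::real. X = D + t *\<^sub>R (E - D)}"
  define Tp where "Tp = {X \<in> T. (X - D) \<bullet> nbar \<ge> 0}"
  define Tm where "Tm = {X \<in> T. (X - D) \<bullet> nbar \<le> 0}"
  define Mp where "Mp = matrix_inv (Nmat lamm mum nbar) ** Nmat lamp mup nbar"
  define V where "V = (\<lambda>X. if X \<in> Tp then kron_I2 (X - Xbar) else kron_I2 (X - Xbar) ** Mp)"
  have n1: "nbar$1 * nbar$1 + nbar$2 * nbar$2 = 1"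
  proof -
    have "nbar \<bullet> nbar = 1" using assms(9) by (simp add: norm_eq_1)
    then show ?thesis by (simp add: inner_vec_def sum_2)
  qed
  have inv: "invertible (Nmat lamm mum nbar)" using Nmat_inv[OF assms(3,4) n1] .
  then have NM: "Nmat lamm mum nbar ** Mp = Nmat lamp mup nbar"
    unfolding Mp_def invertible_def matrix_inv_def
    by (metis (mono_tags, lifting) matrix_mul_assoc matrix_mul_lid someI_ex)
  have perp: "(X - Xbar) \<bullet> nbar = 0" if Xl: "X \<in> l" for X
  proof -
    obtain t where t: "X = D + t *\<^sub>R (E - D)" using Xl l_def by auto
    obtain s where s: "Xbar = D + s *\<^sub>R (E - D)" using assms(11) by auto
    have "X - Xbar = (t - s) *\<^sub>R (E - D)" by (simp add: t s algebra_simps)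
    then show ?thesis using assms(10) by (simp add: inner_commute)
  qed
  have perpD: "(Xbar - D) \<bullet> nbar = 0" using assms(10,11) by (auto simp: inner_commute)
  have "(\<lambda>X. column j (V X)) \<in> Sh k lamp mup lamm mum nbar Tp Tm l F" if F: "F \<in> l" for F j
  proof -
    define e :: "real^4" where "e = axis j 1"
    define cM where "cM = Mp *v e"
    have NcM: "Nmat lamm mum nbar *v cM = Nmat lamp mup nbar *v e"
      unfolding cM_def by (simp add: matrix_vector_mul_assoc NM)
    have r3: "(Nmat lamm mum nbar *v cM)$3 = (Nmat lamp mup nbar *v e)$3" using NcM by simp
    have r4: "(Nmat lamm mum nbar *v cM)$4 = (Nmat lamp mup nbar *v e)$4" using NcM by simp
    have r1: "(Nmat lamm mum nbar *v cM)$1 = (Nmat lamp mup nbar *v e)$1" using NcM by simp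
    have r2: "(Nmat lamm mum nbar *v cM)$2 = (Nmat lamp mup nbar *v e)$2" using NcM by simp
    have cont: "kron_I2 (X - Xbar) *v cM = kron_I2 (X - Xbar) *v e"
      if "(X - Xbar) \<bullet> nbar = 0" for X
    proof (rule kron_cont[OF _ n1])
      show "(X - Xbar)$1 * nbar$1 + (X - Xbar)$2 * nbar$2 = 0"
        using that by (simp add: inner_vec_def sum_2)
      show "- nbar$2 * cM$1 + nbar$1 * cM$3 = - nbar$2 * e$1 + nbar$1 * e$3"
        using r3 unfolding Nmat_mult .
      show "- nbar$2 * cM$2 + nbar$1 * cM$4 = - nbar$2 * e$2 + nbar$1 * e$4"
        using r4 unfolding Nmat_mult .
    qed
    have colV: "column j (V X) = (if X \<in> Tp then kron_I2 (X - Xbar) *v e else kron_I2 (X - Xbar) *v cM)" for X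
      by (simp add: V_def column_mult e_def cM_def matrix_vector_mult_basis)
    show ?thesis
      unfolding Sh_def is_IFE_def mem_Collect_eq
    proof (intro exI conjI ballI impI)
      show "column j (V X) = polyT k (coef Xbar e) X" if "X \<in> Tp" for X
        using that by (simp add: colV kron_poly)
      show "column j (V X) = polyT k (coef Xbar cM) X" if "X \<in> Tm" for X
      proof (cases "X \<in> Tp")
        case True
        then have "(X - D) \<bullet> nbar = 0" using that Tp_def Tm_def by auto
        then have "(X - Xbar) \<bullet> nbar = 0" using perpD
          by (metis (no_types, lifting) diff_diff_eq2 diff_self inner_diff_left inner_zero_left add.commute diff_add_cancel)
        then show ?thesis using True by (simp add: colV kron_poly[symmetric] cont)
      next
        case False
        then show ?thesis by (simp add: colV kron_poly)
      qed
      show "polyT k (coef Xbar cM) X = polyT k (coef Xbar e) X" if "X \<in> l" for X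
        using cont[OF perp[OF that]] by (simp add: kron_poly[of X Xbar _ k])
      show "coef Xbar e 3 = coef Xbar cM 3" by (simp add: coef_def)
      show "stress lamp mup (polyT k (coef Xbar e)) F *v nbar =
            stress lamm mum (polyT k (coef Xbar cM)) F *v nbar"
        by (simp add: vec_eq_iff forall_2 stress_poly r1 r2)
    qed
  qed
  then show ?thesis
    unfolding Let_def l_def[symmetric] Tp_def[symmetric] Tm_def[symmetric] Mp_def[symmetric]
    by (simp add: V_def)
qed

end
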